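(* Let $V$ be a finite-dimensional irreducible representation of $\mathfrak{sl}(2,\mathbb C)$, and let $v\in V$ satisfy $Hv = \lambda v$ for some $\lambda\neq 0$. If neither $E$ nor $F$ annihilates $v$, then $V\otimes\mathfrak{sl}(2,\mathbb C)$ is generated, as an $\mathfrak{sl}(2,\mathbb C)$-module, by $v\otimes H$ together with the $\mathfrak{sl}(2,\mathbb C)$-overshears of $V\otimes\mathfrak{sl}(2,\mathbb C)$.
   Context: $\mathfrak{sl}(2,\mathbb C)$ has basis $E,F,H$ with $[H,E]=2E$, $[H,F]=-2F$, $[E,F]=H$. The module structure on $V\otimes\mathfrak{sl}(2,\mathbb C)$ is $\xi(w\otimes\eta) = \xi w\otimes\eta + w\otimes[\xi,\eta]$. An element $w\otimes\xi$ is an overshear if $\xi^2 w = 0$. *)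

theory Defs
  imports "HOL-Analysis.Analysis"
begin

text \<open>A finite-dimensional representation V of sl(2,C) is modelled as V = C^n
  (n = CARD('n), an arbitrary finite index type) together with the matrices
  E, F, H by which the basis elements act.  An element of sl(2,C) is written
  by its coordinates (a,b,c) meaning aE + bF + cH.\<close>

type_synonym sl2 = "complex \<times> complex \<times> complex"

definition sl2E :: sl2 where "sl2E = (1, 0, 0)"
definition sl2F :: sl2 where "sl2F = (0, 1, 0)"
definition sl2H :: sl2 where "sl2H = (0, 0, 1)"

text \<open>Lie bracket, from [H,E]=2E, [H,F]=-2F, [E,F]=H, bilinearity and antisymmetry.\<close>
definition sl2_bracket :: "sl2 \<Rightarrow> sl2 \<Rightarrow> sl2" where
  "sl2_bracket = (\<lambda>(a,b,c) (a',b',c').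
     (2 * (c * a' - a * c'), 2 * (b * c' - c * b'), a * b' - b * a'))"

definition is_sl2_rep :: "complex^'n^'n \<Rightarrow> complex^'n^'n \<Rightarrow> complex^'n^'n \<Rightarrow> bool" where
  "is_sl2_rep E F H \<longleftrightarrow>
     H ** E - E ** H = mat 2 ** E \<and>
     H ** F - F ** H = - (mat 2 ** F) \<and>
     E ** F - F ** E = H"

text \<open>Action of an element of sl(2,C) on V.\<close>
definition rep :: "complex^'n^'n \<Rightarrow> complex^'n^'n \<Rightarrow> complex^'n^'n \<Rightarrow> sl2
                   \<Rightarrow> complex^'n \<Rightarrow> complex^'n" where
  "rep E F H = (\<lambda>(a,b,c) w. a *s (E *v w) + b *s (F *v w) + c *s (H *v w))"

definition csubspace :: "(complex^'n) set \<Rightarrow> bool" where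
  "csubspace S \<longleftrightarrow> 0 \<in> S \<and> (\<forall>x\<in>S. \<forall>y\<in>S. x + y \<in> S) \<and> (\<forall>c. \<forall>x\<in>S. c *s x \<in> S)"

definition irreducible_rep :: "complex^'n^'n \<Rightarrow> complex^'n^'n \<Rightarrow> complex^'n^'n \<Rightarrow> bool" where
  "irreducible_rep E F H \<longleftrightarrow>
     (\<forall>S. csubspace S \<and> (\<forall>w\<in>S. E *v w \<in> S \<and> F *v w \<in> S \<and> H *v w \<in> S)
          \<longrightarrow> S = {0} \<or> S = UNIV)"

text \<open>V \<otimes> sl(2,C) is modelled as V \<times> V \<times> V, the triple (x,y,z) standing for
  x\<otimes>E + y\<otimes>F + z\<otimes>H.\<close>
type_synonym ('n) tens = "(complex^'n) \<times> (complex^'n) \<times> (complex^'n)"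

definition tensor :: "complex^'n \<Rightarrow> sl2 \<Rightarrow> ('n::finite) tens" where
  "tensor w = (\<lambda>(a,b,c). (a *s w, b *s w, c *s w))"

definition tscale :: "complex \<Rightarrow> ('n::finite) tens \<Rightarrow> ('n::finite) tens" where
  "tscale k = (\<lambda>(x,y,z). (k *s x, k *s y, k *s z))"

text \<open>Module action: xi(w (x) eta) = xi w (x) eta + w (x) [xi,eta], extended linearly.\<close>
definition tact :: "complex^'n^'n \<Rightarrow> complex^'n^'n \<Rightarrow> complex^'n^'n \<Rightarrow> sl2
                    \<Rightarrow> ('n::finite) tens \<Rightarrow> ('n::finite) tens" where
  "tact E F H \<xi> = (\<lambda>(x,y,z).
      tensor (rep E F H \<xi> x) sl2E + tensor x (sl2_bracket \<xi> sl2E)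
    + tensor (rep E F H \<xi> y) sl2F + tensor y (sl2_bracket \<xi> sl2F)
    + tensor (rep E F H \<xi> z) sl2H + tensor z (sl2_bracket \<xi> sl2H))"

definition tsubmodule :: "complex^'n^'n \<Rightarrow> complex^'n^'n \<Rightarrow> complex^'n^'n \<Rightarrow> ('n::finite) tens set \<Rightarrow> bool" where
  "tsubmodule E F H S \<longleftrightarrow>
     0 \<in> S \<and> (\<forall>x\<in>S. \<forall>y\<in>S. x + y \<in> S) \<and> (\<forall>k. \<forall>x\<in>S. tscale k x \<in> S) \<and>
     (\<forall>\<xi>. \<forall>x\<in>S. tact E F H \<xi> x \<in> S)"

text \<open>Submodule generated by a set.\<close>
definition generated :: "complex^'n^'n \<Rightarrow> complex^'n^'n \<Rightarrow> complex^'n^'n \<Rightarrow> ('n::finite) tens set \<Rightarrow> ('n::finite) tens set" where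
  "generated E F H X = \<Inter>{S. tsubmodule E F H S \<and> X \<subseteq> S}"

text \<open>sl(2,C)-overshears: w\<otimes>\<xi> with xi^2 w = 0.\<close>
definition overshears :: "complex^'n^'n \<Rightarrow> complex^'n^'n \<Rightarrow> complex^'n^'n \<Rightarrow> ('n::finite) tens set" where
  "overshears E F H = {tensor w \<xi> | w \<xi>. rep E F H \<xi> (rep E F H \<xi> w) = 0}"

end

theory Submission
  imports Defs
begin


lemma mat_vec: "mat c *v (x::complex^'n) = c *s x"
  by (simp add: vec_eq_iff matrix_vector_mult_def mat_def mult_delta_left)
lemma mat_smult: "(mat c ** A) *v (w::complex^'n) = c *s (A *v w)"
  by (simp add: matrix_vector_mul_assoc[symmetric] mat_vec)
lemma neg_mv: "(- A) *v (w::complex^'n) = - (A *v w)"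
  by (simp add: vec_eq_iff matrix_vector_mult_def sum_negf)

lemma rels:
  assumes "is_sl2_rep E F H"
  shows "H *v (E *v w) = E *v (H *v w) + 2 *s (E *v w)"
    and "H *v (F *v w) = F *v (H *v w) - 2 *s (F *v w)"
    and "E *v (F *v w) = F *v (E *v w) + H *v w"
proof -
  have a: "H ** E - E ** H = mat 2 ** E" "H ** F - F ** H = - (mat 2 ** F)" "E ** F - F ** E = H"
    using assms unfolding is_sl2_rep_def by auto
  have "(H ** E - E ** H) *v w = (mat 2 ** E) *v w" using a(1) by simp
  then show "H *v (E *v w) = E *v (H *v w) + 2 *s (E *v w)"
    by (simp add: matrix_vector_mult_diff_rdistrib matrix_vector_mul_assoc mat_smult algebra_simps)
  have "(H ** F - F ** H) *v w = (- (mat 2 ** F)) *v w" using a(2) by simp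
  then show "H *v (F *v w) = F *v (H *v w) - 2 *s (F *v w)"
    by (simp add: matrix_vector_mult_diff_rdistrib matrix_vector_mul_assoc mat_smult neg_mv algebra_simps)
  have "(E ** F - F ** E) *v w = H *v w" using a(3) by simp
  then show "E *v (F *v w) = F *v (E *v w) + H *v w"
    by (simp add: matrix_vector_mult_diff_rdistrib matrix_vector_mul_assoc algebra_simps)
qed

lemma tactE: "tact E F H sl2E (x,y,z) = (E *v x - 2 *s z, E *v y, E *v z + y)"
  by (simp add: tact_def tensor_def rep_def sl2E_def sl2F_def sl2H_def sl2_bracket_def vec_eq_iff)
lemma tactF: "tact E F H sl2F (x,y,z) = (F *v x, F *v y + 2 *s z, F *v z - x)"
  by (simp add: tact_def tensor_def rep_def sl2E_def sl2F_def sl2H_def sl2_bracket_def vec_eq_iff)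
lemma tactH: "tact E F H sl2H (x,y,z) = (H *v x + 2 *s x, H *v y - 2 *s y, H *v z)"
  by (simp add: tact_def tensor_def rep_def sl2E_def sl2F_def sl2H_def sl2_bracket_def vec_eq_iff)
lemma tensorE: "tensor w sl2E = (w,0,0)" by (simp add: tensor_def sl2E_def)
lemma tensorF: "tensor w sl2F = (0,w,0)" by (simp add: tensor_def sl2F_def)
lemma tensorH: "tensor w sl2H = (0,0,w)" by (simp add: tensor_def sl2H_def)
lemma repE: "rep E F H sl2E w = E *v w" by (simp add: rep_def sl2E_def)
lemma repF: "rep E F H sl2F w = F *v w" by (simp add: rep_def sl2F_def)
lemma tscale3: "tscale k (x,y,z) = (k *s x, k *s y, k *s z)" by (simp add: tscale_def)

lemma gen_sub: "tsubmodule E F H (generated E F H X)"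
  unfolding tsubmodule_def generated_def by auto
lemma gen_sup: "X \<subseteq> generated E F H X"
  unfolding generated_def by auto


lemma span_inv:
  fixes A :: "complex^'n^'n"
  assumes "\<And>s. s \<in> S \<Longrightarrow> A *v s \<in> vec.span S" "y \<in> vec.span S"
  shows "A *v y \<in> vec.span S"
proof -
  have "vec.subspace {y. A *v y \<in> vec.span S}"
    unfolding vec.subspace_def
    by (simp add: matrix_vector_right_distrib vector_scalar_commute vec.span_add vec.span_scale vec.span_zero)
  moreover have "S \<subseteq> {y. A *v y \<in> vec.span S}" using assms(1) by auto
  ultimately have "vec.span S \<subseteq> {y. A *v y \<in> vec.span S}" by (simp add: vec.span_minimal)
  then show ?thesis using assms(2) by auto
qed

lemma eig_span_zero:
  fixes H :: "complex^'n^'n" and g :: "'i \<Rightarrow> complex^'n"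
  assumes "finite I" "\<forall>i\<in>I. H *v g i = ev i *s g i" "x \<in> vec.span (g ` I)"
    "H *v x = c *s x" "\<forall>i\<in>I. ev i \<noteq> c"
  shows "x = 0"
  using assms
proof (induction I arbitrary: x rule: finite_induct)
  case empty then show ?case by simp
next
  case (insert s I)
  from insert.prems(2) obtain a where a: "x - a *s g s \<in> vec.span (g ` I)"
    using vec.span_insert[of "g s" "g ` I"] by auto
  have Hs: "H *v g s = ev s *s g s" using insert.prems(1) by auto
  have inv: "H *v (x - a *s g s) \<in> vec.span (g ` I)"
    apply (rule span_inv[OF _ a])
  proof -
    fix t assume "t \<in> g ` I"
    then obtain i where i: "i \<in> I" "t = g i" by auto
    then have "H *v t = ev i *s g i" using insert.prems(1) by auto
    then show "H *v t \<in> vec.span (g ` I)" using i by (simp add: vec.span_scale vec.span_base)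
  qed
  have mem: "H *v (x - a *s g s) - ev s *s (x - a *s g s) \<in> vec.span (g ` I)"
    using vec.span_diff[OF inv vec.span_scale[OF a]] .
  have eq: "H *v (x - a *s g s) - ev s *s (x - a *s g s) = (c - ev s) *s x"
    using Hs insert.prems(3)
    by (simp add: matrix_vector_mult_diff_distrib vector_scalar_commute algebra_simps vec_eq_iff)
  have "(c - ev s) *s x \<in> vec.span (g ` I)" using mem unfolding eq .
  then have "(1 / (c - ev s)) *s ((c - ev s) *s x) \<in> vec.span (g ` I)" by (rule vec.span_scale)
  moreover have "c - ev s \<noteq> 0" using insert.prems(4) by auto
  moreover have "(1 / (c - ev s)) *s ((c - ev s) *s x) = x"
  proof -
    have "1 / (c - ev s) * (c - ev s) = 1" using \<open>c - ev s \<noteq> 0\<close> by simp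
    then show ?thesis by (simp only: vector_smult_assoc vector_smult_lid)
  qed
  ultimately have xs: "x \<in> vec.span (g ` I)" by simp
  have p1: "\<forall>i\<in>I. H *v g i = ev i *s g i" using insert.prems(1) by simp
  have p4: "\<forall>i\<in>I. ev i \<noteq> c" using insert.prems(4) by simp
  show ?case by (rule insert.IH[OF p1 xs insert.prems(3) p4])
qed

lemma chain_bound:
  fixes H :: "complex^'n^'n" and g :: "nat \<Rightarrow> complex^'n"
  assumes ev: "\<And>k. H *v g k = (c + of_nat k * d) *s g k" and d: "d \<noteq> 0"
    and nz: "\<And>k. k < N \<Longrightarrow> g k \<noteq> 0"
  shows "N \<le> CARD('n)"
proof -
  have "vec.independent (g ` {..<N}) \<and> card (g ` {..<N}) = N"
    using nz
  proof (induction N)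
    case 0 then show ?case by (simp add: vec.independent_empty)
  next
    case (Suc N)
    have IH: "vec.independent (g ` {..<N}) \<and> card (g ` {..<N}) = N" using Suc.IH Suc.prems by simp
    have ns: "g N \<notin> vec.span (g ` {..<N})"
    proof
      assume "g N \<in> vec.span (g ` {..<N})"
      have P2: "\<forall>i\<in>{..<N}. H *v g i = (\<lambda>k. c + of_nat k * d) i *s g i" by (intro ballI ev)
      have P5: "\<forall>i\<in>{..<N}. (\<lambda>k. c + of_nat k * d) i \<noteq> c + of_nat N * d"
      proof
        fix i assume "i \<in> {..<N}"
        then have "(of_nat i :: complex) \<noteq> of_nat N" by simp
        then show "(\<lambda>k. c + of_nat k * d) i \<noteq> c + of_nat N * d" using d by (metis add_left_cancel mult_right_cancel)
      qed
      have "g N = 0" by (rule eig_span_zero[OF finite_lessThan P2 \<open>g N \<in> _\<close> ev P5])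
      then show False using Suc.prems by auto
    qed
    have gN: "g N \<notin> g ` {..<N}"
    proof
      assume "g N \<in> g ` {..<N}"
      then have "g N \<in> vec.span (g ` {..<N})" by (rule vec.span_base)
      then show False using ns by contradiction
    qed
    have ins: "g ` {..<Suc N} = insert (g N) (g ` {..<N})" by (simp add: lessThan_Suc)
    have ind: "vec.independent (insert (g N) (g ` {..<N}))"
      using vec.independent_insertI[OF ns] IH by simp
    have cd: "card (insert (g N) (g ` {..<N})) = Suc N" using gN IH by simp
    show ?case unfolding ins using ind cd by simp
  qed
  then have i1: "vec.independent (g ` {..<N})" and i2: "card (g ` {..<N}) = N" by auto
  have "card (g ` {..<N}) \<le> vec.dim (UNIV :: (complex^'n) set)"
    by (rule vec.independent_card_le_dim[OF subset_UNIV i1])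
  moreover have "vec.dim (UNIV :: (complex^'n) set) = CARD('n)"
    by (simp only: vec.dim_UNIV card_cart_basis)
  ultimately show ?thesis using i2 by simp
qed


primrec pw :: "complex^'n^'n \<Rightarrow> nat \<Rightarrow> complex^'n \<Rightarrow> complex^'n" where
  "pw A 0 w = w"
| "pw A (Suc k) w = A *v pw A k w"

lemma pw_add: "pw A (i + j) w = pw A i (pw A j w)"
  by (induction i) auto

lemma pw_zero: "pw A i 0 = 0"
  by (induction i) auto

lemma pw_zero_mono: "pw A k w = 0 \<Longrightarrow> k \<le> l \<Longrightarrow> pw A l w = 0"
  using pw_add[of A "l - k" k w] pw_zero[of A "l - k"] by simp

lemma last_nonzero:
  fixes H A :: "complex^'n^'n"
  assumes ev: "\<And>k. H *v pw A k w = (c + of_nat k * d) *s pw A k w" and d: "d \<noteq> 0"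
    and w: "w \<noteq> 0"
  shows "\<exists>m. pw A m w \<noteq> 0 \<and> pw A (Suc m) w = 0"
proof (rule ccontr)
  assume "\<not> ?thesis"
  then have step: "\<And>m. pw A m w \<noteq> 0 \<Longrightarrow> pw A (Suc m) w \<noteq> 0" by blast
  have all: "pw A k w \<noteq> 0" for k
    by (induction k) (use w step in auto)
  have "Suc CARD('n) \<le> CARD('n)"
    by (rule chain_bound[of H "\<lambda>k. pw A k w" c d, OF ev d all])
  then show False by simp
qed

lemma sm_add: "tsubmodule E F H S \<Longrightarrow> (a,b,c) \<in> S \<Longrightarrow> (d,e,f) \<in> S \<Longrightarrow> (a+d, b+e, c+f) \<in> S"
  unfolding tsubmodule_def by (metis add_Pair)
lemma sm_scale: "tsubmodule E F H S \<Longrightarrow> (a,b,c) \<in> S \<Longrightarrow> (k *s a, k *s b, k *s c) \<in> S"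
  unfolding tsubmodule_def by (metis tscale3)
lemma sm_E: "tsubmodule E F H S \<Longrightarrow> (a,b,c) \<in> S \<Longrightarrow> (E *v a - 2 *s c, E *v b, E *v c + b) \<in> S"
  unfolding tsubmodule_def by (metis tactE)
lemma sm_F: "tsubmodule E F H S \<Longrightarrow> (a,b,c) \<in> S \<Longrightarrow> (F *v a, F *v b + 2 *s c, F *v c - a) \<in> S"
  unfolding tsubmodule_def by (metis tactF)
lemma sm_H: "tsubmodule E F H S \<Longrightarrow> (a,b,c) \<in> S \<Longrightarrow> (H *v a + 2 *s a, H *v b - 2 *s b, H *v c) \<in> S"
  unfolding tsubmodule_def by (metis tactH)
lemma sm_lin: "tsubmodule E F H S \<Longrightarrow> (a,b,c) \<in> S \<Longrightarrow> (d,e,f) \<in> S \<Longrightarrow>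
   (k *s a + l *s d, k *s b + l *s e, k *s c + l *s f) \<in> S"
  by (intro sm_add sm_scale)

lemma eqmem: "x \<in> S \<Longrightarrow> x = y \<Longrightarrow> y \<in> S" by simp



lemma T_univ:
  fixes E F H :: "complex^'n^'n"
  assumes sub: "tsubmodule E F H S" and irr: "irreducible_rep E F H" and w: "w \<noteq> 0"
    and w1: "(w,0,0) \<in> S" and w2: "(0,w,0) \<in> S" and w3: "(0,0,w) \<in> S"
  shows "S = UNIV"
proof -
  define T where "T = {x. (x,0,0) \<in> S \<and> (0,x,0) \<in> S \<and> (0,0,x) \<in> S}"
  have z: "(0,0,0) \<in> S" using sub unfolding tsubmodule_def by (simp add: zero_prod_def)
  have c1: "0 \<in> T" using z unfolding T_def by simp
  have c2: "x + y \<in> T" if "x \<in> T" "y \<in> T" for x y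
  proof -
    have a: "(x, 0, 0) \<in> S" "(0, x, 0) \<in> S" "(0, 0, x) \<in> S"
      "(y, 0, 0) \<in> S" "(0, y, 0) \<in> S" "(0, 0, y) \<in> S" using that unfolding T_def by auto
    have "(x + y, 0, 0) \<in> S" using sm_add[OF sub a(1) a(4)] by simp
    moreover have "(0, x + y, 0) \<in> S" using sm_add[OF sub a(2) a(5)] by simp
    moreover have "(0, 0, x + y) \<in> S" using sm_add[OF sub a(3) a(6)] by simp
    ultimately show ?thesis unfolding T_def by simp
  qed
  have c3: "c *s x \<in> T" if "x \<in> T" for c x
  proof -
    have a: "(x, 0, 0) \<in> S" "(0, x, 0) \<in> S" "(0, 0, x) \<in> S" using that unfolding T_def by auto
    have "(c *s x, 0, 0) \<in> S" using sm_scale[OF sub a(1), of c] by simp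
    moreover have "(0, c *s x, 0) \<in> S" using sm_scale[OF sub a(2), of c] by simp
    moreover have "(0, 0, c *s x) \<in> S" using sm_scale[OF sub a(3), of c] by simp
    ultimately show ?thesis unfolding T_def by simp
  qed
  have cs: "csubspace T" unfolding csubspace_def using c1 c2 c3 by blast
  have inv: "E *v x \<in> T \<and> F *v x \<in> T \<and> H *v x \<in> T" if "x \<in> T" for x
  proof -
    have a: "(x, 0, 0) \<in> S" "(0, x, 0) \<in> S" "(0, 0, x) \<in> S" using that unfolding T_def by auto
    have "(E *v x, 0, 0) \<in> S" using sm_E[OF sub a(1)] by simp
    moreover have "(0, E *v x, 0) \<in> S"
      using sm_lin[OF sub sm_E[OF sub a(2)] a(3), of 1 "-1"] by simp
    moreover have "(0, 0, E *v x) \<in> S"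
      using sm_lin[OF sub sm_E[OF sub a(3)] a(1), of 1 2] by simp
    moreover have "(F *v x, 0, 0) \<in> S"
      using sm_lin[OF sub sm_F[OF sub a(1)] a(3), of 1 1] by simp
    moreover have "(0, F *v x, 0) \<in> S" using sm_F[OF sub a(2)] by simp
    moreover have "(0, 0, F *v x) \<in> S"
      using sm_lin[OF sub sm_F[OF sub a(3)] a(2), of 1 "-2"] by simp
    moreover have "(H *v x, 0, 0) \<in> S"
      using sm_lin[OF sub sm_H[OF sub a(1)] a(1), of 1 "-2"] by simp
    moreover have "(0, H *v x, 0) \<in> S"
      using sm_lin[OF sub sm_H[OF sub a(2)] a(2), of 1 2] by simp
    moreover have "(0, 0, H *v x) \<in> S" using sm_H[OF sub a(3)] by simp
    ultimately show ?thesis unfolding T_def by auto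
  qed
  have "w \<in> T" using w1 w2 w3 unfolding T_def by auto
  then have "T \<noteq> {0}" using w by auto
  then have TU: "T = UNIV" using irr cs inv unfolding irreducible_rep_def by blast
  show ?thesis
  proof (rule set_eqI, rule iffI)
    fix t :: "'n tens" assume "t \<in> UNIV"
    obtain x y z where t: "t = (x,y,z)" by (cases t) auto
    have "x \<in> T" "y \<in> T" "z \<in> T" using TU by auto
    then have a: "(x,0,0) \<in> S" "(0,y,0) \<in> S" "(0,0,z) \<in> S" unfolding T_def by auto
    show "t \<in> S" using sm_add[OF sub sm_add[OF sub a(1) a(2)] a(3)] t by simp
  qed simp
qed



lemma sinv: "(c::complex) \<noteq> 0 \<Longrightarrow> (1/c) *s (c *s x) = x"
  by (simp add: vector_smult_assoc)

lemma mv_neg: "(A :: complex^'n^'n) *v (- x) = - (A *v x)"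
  using matrix_vector_mult_diff_distrib[of A 0 x] by simp

theorem proposition5p4:
  fixes E F H :: "complex^'n^'n" and v :: "complex^'n" and lam :: complex
  assumes "is_sl2_rep E F H"
    and "irreducible_rep E F H"
    and "H *v v = lam *s v"
    and "lam \<noteq> 0"
    and "E *v v \<noteq> 0"
    and "F *v v \<noteq> 0"
  shows "generated E F H (insert (tensor v sl2H) (overshears E F H)) = UNIV"
proof -
  note rep = assms(1) and irr = assms(2) and Hv = assms(3) and Ev = assms(5) and Fv = assms(6)
  note HE = rels(1)[OF rep] and HF = rels(2)[OF rep] and EF = rels(3)[OF rep]
  have v0: "v \<noteq> 0" using Ev by auto
  have evE: "H *v pw E k v = (lam + of_nat k * 2) *s pw E k v" for k
  proof (induction k)
    case 0 then show ?case using Hv by simp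
  next
    case (Suc k)
    have "H *v pw E (Suc k) v = E *v (H *v pw E k v) + 2 *s pw E (Suc k) v" using HE by simp
    also have "\<dots> = (lam + of_nat (Suc k) * 2) *s pw E (Suc k) v"
      unfolding Suc by (simp add: vector_scalar_commute vec_eq_iff algebra_simps)
    finally show ?case .
  qed
  obtain m where m1: "pw E m v \<noteq> 0" and m2: "pw E (Suc m) v = 0"
    using last_nonzero[of H E v lam 2, OF evE _ v0] by auto
  have m_pos: "m \<ge> 1"
  proof (rule ccontr)
    assume "\<not> m \<ge> 1" then have "m = 0" by simp
    then show False using m2 Ev by simp
  qed
  define u where "u = pw E m v"
  define mu where "mu = lam + of_nat m * 2"
  have u0: "u \<noteq> 0" using m1 u_def by simp
  have Eu: "E *v u = 0" using m2 u_def by simp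
  have Hu: "H *v u = mu *s u" using evE[of m] u_def mu_def by simp
  define X where "X k = pw F k u" for k
  have X0: "X 0 = u" and XS: "X (Suc k) = F *v X k" for k unfolding X_def by auto
  have HX: "H *v X k = (mu + of_nat k * (-2)) *s X k" for k
  proof (induction k)
    case 0 then show ?case using Hu X0 by simp
  next
    case (Suc k)
    have "H *v X (Suc k) = F *v (H *v X k) - 2 *s X (Suc k)" using HF XS by simp
    also have "\<dots> = (mu + of_nat (Suc k) * (-2)) *s X (Suc k)"
      unfolding Suc XS by (simp add: vector_scalar_commute vec_eq_iff algebra_simps)
    finally show ?case .
  qed
  have EX: "E *v X (Suc k) = (of_nat (Suc k) * (mu - of_nat k)) *s X k" for k
  proof (induction k)
    case 0 then show ?case using EF[of u] Eu Hu X0 XS by simp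
  next
    case (Suc k)
    have "E *v X (Suc (Suc k)) = F *v (E *v X (Suc k)) + H *v X (Suc k)" using EF XS by simp
    also have "\<dots> = (of_nat (Suc k) * (mu - of_nat k)) *s X (Suc k) + (mu + of_nat (Suc k) * (-2)) *s X (Suc k)"
      by (simp only: Suc HX vector_scalar_commute XS[symmetric])
    also have "\<dots> = (of_nat (Suc (Suc k)) * (mu - of_nat (Suc k))) *s X (Suc k)"
    proof -
      have ceq: "of_nat (Suc k) * (mu - of_nat k) + (mu + of_nat (Suc k) * (-2)) = of_nat (Suc (Suc k)) * (mu - of_nat (Suc k))"
        by (simp add: algebra_simps)
      show ?thesis by (simp only: vector_sadd_rdistrib[symmetric] ceq)
    qed
    finally show ?case .
  qed
  obtain K where K1: "X K \<noteq> 0" and K2: "X (Suc K) = 0"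
    using last_nonzero[of H F u mu "-2", OF HX[unfolded X_def] _ u0] X_def by auto
  have muK: "mu = of_nat K"
  proof -
    have "(of_nat (Suc K) * (mu - of_nat K)) *s X K = 0" using EX[of K] K2 by simp
    then have "of_nat (Suc K) * (mu - of_nat K) = 0" using K1 by (simp add: vec_eq_iff) (metis mult_eq_0_iff)
    moreover have "(of_nat (Suc K) :: complex) \<noteq> 0" by (simp only: of_nat_eq_0_iff)
    ultimately show ?thesis by simp
  qed
  have Xnz: "X k \<noteq> 0" if "k \<le> K" for k
    using pw_zero_mono[of F k u K] that K1 unfolding X_def by auto
  have Xz: "X k = 0" if "K < k" for k
    using pw_zero_mono[of F "Suc K" u k] that K2 unfolding X_def by auto
  define W where "W = vec.span (X ` {..K})"
  have baseW: "c *s X k \<in> W" if "k \<le> K" for c k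
    unfolding W_def using that by (intro vec.span_scale vec.span_base) auto
  have zW: "0 \<in> W" unfolding W_def by (rule vec.span_zero)
  have iE: "E *v t \<in> W" if tX: "t \<in> X ` {..K}" for t
  proof -
    obtain k where k: "k \<le> K" "t = X k" using tX by auto
    show ?thesis
    proof (cases k)
      case 0 then show ?thesis using k Eu X0 zW by simp
    next
      case (Suc j) then show ?thesis using k EX[of j] baseW[of j] by simp
    qed
  qed
  have iF: "F *v t \<in> W" if tX: "t \<in> X ` {..K}" for t
  proof -
    obtain k where k: "k \<le> K" "t = X k" using tX by auto
    show ?thesis
    proof (cases "Suc k \<le> K")
      case True then show ?thesis using k XS[of k] baseW[of "Suc k" 1] by simp
    next
      case False then show ?thesis using k XS[of k] Xz[of "Suc k"] zW by simp
    qed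
  qed
  have iH: "H *v t \<in> W" if tX: "t \<in> X ` {..K}" for t
  proof -
    obtain k where k: "k \<le> K" "t = X k" using tX by auto
    show ?thesis unfolding k(2) HX[of k] using baseW[OF k(1)] .
  qed
  have invW: "E *v y \<in> W \<and> F *v y \<in> W \<and> H *v y \<in> W" if "y \<in> W" for y
    using span_inv[of "X ` {..K}" E y] span_inv[of "X ` {..K}" F y] span_inv[of "X ` {..K}" H y]
      iE iF iH that unfolding W_def by blast
  have csW: "csubspace W"
    using vec.subspace_span[of "X ` {..K}"] unfolding W_def csubspace_def vec.subspace_def by blast
  have "u \<in> W" using baseW[of 0 1] X0 by simp
  then have "W \<noteq> {0}" using u0 by auto
  then have WU: "W = UNIV" using irr csW invW unfolding irreducible_rep_def by blast
  have vW: "v \<in> vec.span (X ` {..K})" using WU unfolding W_def by auto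
  have HX': "\<forall>k\<in>I. H *v X k = (\<lambda>k. mu + of_nat k * (-2)) k *s X k" for I using HX by simp
  have mK: "m \<le> K"
  proof (rule ccontr)
    assume "\<not> m \<le> K"
    then have "\<forall>k\<in>{..K}. (\<lambda>k. mu + of_nat k * (-2)) k \<noteq> lam"
      unfolding mu_def by auto
    then have "v = 0" using eig_span_zero[OF finite_atMost HX' vW Hv] by blast
    then show False using v0 by simp
  qed
  have ins: "X ` {..K} = insert (X m) (X ` ({..K} - {m}))" using mK by auto
  obtain a where a: "v - a *s X m \<in> vec.span (X ` ({..K} - {m}))"
    using vW unfolding ins vec.span_insert by auto
  have "H *v (v - a *s X m) = lam *s (v - a *s X m)"
    using Hv HX[of m] unfolding mu_def
    by (simp add: matrix_vector_mult_diff_distrib vector_scalar_commute vec_eq_iff algebra_simps)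
  moreover have "\<forall>k\<in>{..K} - {m}. (\<lambda>k. mu + of_nat k * (-2)) k \<noteq> lam"
    unfolding mu_def by auto
  ultimately have "v - a *s X m = 0"
    using eig_span_zero[OF _ HX' a] by blast
  then have va: "v = a *s X m" by simp
  have Xm1: "X (Suc m) \<noteq> 0" using Fv va XS[of m] by (simp add: vector_scalar_commute)
  have a0: "a \<noteq> 0" using va v0 by auto
  have mK1: "Suc m \<le> K" using Xm1 Xz by (meson not_le)
  define M where "M = generated E F H (insert (tensor v sl2H) (overshears E F H))"
  have sub: "tsubmodule E F H M" unfolding M_def by (rule gen_sub)
  have gens: "insert (tensor v sl2H) (overshears E F H) \<subseteq> M" unfolding M_def by (rule gen_sup)
  have Mv: "(0, 0, v) \<in> M" using gens tensorH[of v] by auto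
  have ov: "(w, 0, 0) \<in> M" if "E *v (E *v w) = 0" for w
  proof -
    have "rep E F H sl2E (rep E F H sl2E w) = 0" using that by (simp add: repE)
    then have "tensor w sl2E \<in> overshears E F H"
      unfolding overshears_def by blast
    then show ?thesis using gens tensorE[of w] by auto
  qed
  have Mu: "(u, 0, 0) \<in> M" using ov Eu by simp
  have MX1: "(X 1, 0, 0) \<in> M"
    using ov[of "X 1"] EX[of 0] Eu X0 by (simp add: vector_scalar_commute)
  have Mu3: "(0, 0, u) \<in> M"
    using sm_lin[OF sub MX1 sm_F[OF sub Mu], of 1 "-1"] XS[of 0] X0 by simp
  have hk: "(0, (2 * of_nat (Suc k)) *s X k, X (Suc k)) \<in> M" for k
  proof (induction k)
    case 0 show ?case using sm_F[OF sub Mu3] X0 XS[of 0] by simp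
  next
    case (Suc k)
    show ?case by (rule eqmem[OF sm_F[OF sub Suc]])
      (simp add: XS mv_neg vector_scalar_commute vec_eq_iff algebra_simps)
  qed
  have ek: "(X (Suc (Suc k)), (- (of_nat (Suc (Suc k)) * of_nat (Suc k))) *s X k,
             (- of_nat (Suc (Suc k))) *s X (Suc k)) \<in> M" for k
  proof (induction k)
    case 0 show ?case by (rule eqmem[OF sm_F[OF sub sm_F[OF sub Mu]]])
      (simp add: X0 XS mv_neg vector_scalar_commute vec_eq_iff algebra_simps)
  next
    case (Suc k)
    show ?case by (rule eqmem[OF sm_F[OF sub Suc]])
      (simp add: XS mv_neg vector_scalar_commute vec_eq_iff algebra_simps)
  qed
  obtain i where mi: "m = Suc i" using m_pos by (cases m) auto
  have MXm: "(0, 0, X m) \<in> M"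
    by (rule eqmem[OF sm_scale[OF sub Mv, of "1/a"]]) (simp add: va sinv a0)
  have n1: "(2 * of_nat (Suc i) :: complex) \<noteq> 0"
  proof -
    have "(of_nat (Suc i) :: complex) \<noteq> 0" by (simp only: of_nat_eq_0_iff)
    then show ?thesis by (simp del: of_nat_Suc)
  qed
  have B1: "(0, X i, 0) \<in> M"
  proof -
    have "(0, (2 * of_nat (Suc i)) *s X i, 0) \<in> M"
      by (rule eqmem[OF sm_lin[OF sub hk[of i] MXm, of 1 "-1"]]) (simp add: mi)
    from sm_scale[OF sub this, of "1/(2 * of_nat (Suc i))"]
    show ?thesis by (simp only: sinv[OF n1] vector_smult_rzero)
  qed
  have A2: "(X (Suc (Suc i)), 0, 0) \<in> M"
  proof -
    have Q: "(0, (of_nat (Suc (Suc i)) * of_nat (Suc i)) *s X i, of_nat (Suc (Suc i)) *s X m) \<in> M"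
      by (rule eqmem[OF sm_lin[OF sub B1 MXm, of "of_nat (Suc (Suc i)) * of_nat (Suc i)" "of_nat (Suc (Suc i))"]]) simp
    show ?thesis
      by (rule eqmem[OF sm_lin[OF sub ek[of i] Q, of 1 1]]) (simp add: mi vec_eq_iff)
  qed
  have c1: "(of_nat (Suc (Suc i)) * (mu - of_nat (Suc i)) :: complex) \<noteq> 0"
  proof -
    have e: "mu - of_nat (Suc i) = of_nat (K - Suc i)" using mK1 mi muK by (simp only: of_nat_diff)
    have "(of_nat (Suc (Suc i) * (K - Suc i)) :: complex) \<noteq> 0"
      by (simp only: of_nat_eq_0_iff) (use mK1 mi in simp)
    then show ?thesis unfolding e of_nat_mult .
  qed
  have c0: "(of_nat (Suc i) * (mu - of_nat i) :: complex) \<noteq> 0"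
  proof -
    have e: "mu - of_nat i = of_nat (K - i)" using mK1 mi muK by (simp only: of_nat_diff)
    have "(of_nat (Suc i * (K - i)) :: complex) \<noteq> 0"
      by (simp only: of_nat_eq_0_iff) (use mK1 mi in simp)
    then show ?thesis unfolding e of_nat_mult .
  qed
  have A1: "(X (Suc i), 0, 0) \<in> M"
  proof -
    have "((of_nat (Suc (Suc i)) * (mu - of_nat (Suc i))) *s X (Suc i), 0, 0) \<in> M"
      by (rule eqmem[OF sm_E[OF sub A2]]) (simp add: EX)
    from sm_scale[OF sub this, of "1/(of_nat (Suc (Suc i)) * (mu - of_nat (Suc i)))"]
    show ?thesis by (simp only: sinv[OF c1] vector_smult_rzero)
  qed
  have A0: "(X i, 0, 0) \<in> M"
  proof -
    have "((of_nat (Suc i) * (mu - of_nat i)) *s X i, 0, 0) \<in> M"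
      by (rule eqmem[OF sm_E[OF sub A1]]) (simp add: EX)
    from sm_scale[OF sub this, of "1/(of_nat (Suc i) * (mu - of_nat i))"]
    show ?thesis by (simp only: sinv[OF c0] vector_smult_rzero)
  qed
  have B0: "(0, 0, X i) \<in> M"
  proof -
    have "(0, 0, (of_nat (Suc i) * (mu - of_nat i)) *s X i) \<in> M"
      by (rule eqmem[OF sm_lin[OF sub sm_E[OF sub MXm] A1, of 1 2]]) (simp add: EX mi)
    from sm_scale[OF sub this, of "1/(of_nat (Suc i) * (mu - of_nat i))"]
    show ?thesis by (simp only: sinv[OF c0] vector_smult_rzero)
  qed
  have "i \<le> K" using mK mi by simp
  then have "M = UNIV" using T_univ[OF sub irr Xnz A0 B1 B0] by simp
  then show ?thesis unfolding M_def .
qed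
end
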